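(* Let $N\geq 1$ and let $K$ be an $N\times N$ real matrix with non-negative entries which is diagonally symmetrizable, i.e. $K=D\cdot S$ for some diagonal matrix $D$ with positive diagonal entries and some symmetric real matrix $S$. Let $R_0=\rho(K)$ be the spectral radius of $K$ and define $R_e:[0,1]^N\to\mathbb{R}_+$ by $R_e(\eta)=\rho\big(K\cdot \mathrm{Diag}(\eta)\big)$, where $\mathrm{Diag}(\eta)$ is the diagonal matrix with diagonal entries $\eta_1,\dots,\eta_N$. (i) If every eigenvalue of $K$ is a non-negative real number, then $R_e$ is convex on $[0,1]^N$. (ii) If $R_0$ is a simple eigenvalue of $K$ and every eigenvalue of $K$ belongs to $(-\infty,0]\cup\{R_0\}$, then $R_e$ is concave on $[0,1]^N$.
   Context: $\rho(A)$ denotes the spectral radius of a square matrix $A$ (maximum modulus of its eigenvalues). An eigenvalue is simple if its algebraic multiplicity is $1$. *)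

theory Defs
  imports "HOL-Analysis.Analysis" "Jordan_Normal_Form.Spectral_Radius"
begin

definition cmat :: "real mat \<Rightarrow> complex mat" where
  "cmat A = map_mat complex_of_real A"

definition diag_symmetrizable :: "nat \<Rightarrow> real mat \<Rightarrow> bool" where
  "diag_symmetrizable N K \<longleftrightarrow> (\<exists>D S. D \<in> carrier_mat N N \<and> S \<in> carrier_mat N N \<and>
      diagonal_mat D \<and> (\<forall>i<N. D $$ (i,i) > 0) \<and> transpose_mat S = S \<and> K = D * S)"

definition Re_fun :: "nat \<Rightarrow> real mat \<Rightarrow> (nat \<Rightarrow> real) \<Rightarrow> real" where
  "Re_fun N K \<eta> = spectral_radius (cmat (K * mat_diag N \<eta>))"

text \<open>The cube [0,1]^N; a point eta is given by its coordinates eta 0, ..., eta (N-1)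
  (other values are irrelevant since mat_diag N eta only reads those).\<close>
definition unit_cube :: "nat \<Rightarrow> (nat \<Rightarrow> real) set" where
  "unit_cube N = {\<eta>. \<forall>i<N. 0 \<le> \<eta> i \<and> \<eta> i \<le> 1}"

text \<open>Convexity / concavity on a set of coordinate vectors, written out literally
  (nat => real carries no real_vector instance, so the library convex_on is unfolded).\<close>
definition convex_on_coord :: "(nat \<Rightarrow> real) set \<Rightarrow> ((nat \<Rightarrow> real) \<Rightarrow> real) \<Rightarrow> bool" where
  "convex_on_coord A f \<longleftrightarrow> (\<forall>x\<in>A. \<forall>y\<in>A. \<forall>t::real. 0 \<le> t \<and> t \<le> 1 \<longrightarrow>
      f (\<lambda>i. (1 - t) * x i + t * y i) \<le> (1 - t) * f x + t * f y)"

definition concave_on_coord :: "(nat \<Rightarrow> real) set \<Rightarrow> ((nat \<Rightarrow> real) \<Rightarrow> real) \<Rightarrow> bool" where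
  "concave_on_coord A f \<longleftrightarrow> convex_on_coord A (\<lambda>x. - f x)"

end

theory Submission
  imports Defs "Jordan_Normal_Form.Jordan_Normal_Form_Uniqueness"
begin

hide_const (open) Coset.order



lemma sum_min1_le: fixes n_as :: "(nat \<times> 'a) list" shows "(\<Sum>n \<leftarrow> map fst [(n,e)\<leftarrow>n_as. e = r]. min 1 n) \<le> sum_list (map fst (filter (\<lambda>na. snd na = r) n_as))"
  by (induct n_as) (auto simp: min_def)

lemma order_ge_2:
  fixes M :: "complex mat"
  assumes M: "M \<in> carrier_mat n n" and v: "v1 \<in> carrier_vec n" "v2 \<in> carrier_vec n"
   and e1: "M *\<^sub>v v1 = r \<cdot>\<^sub>v v1" and e2: "M *\<^sub>v v2 = r \<cdot>\<^sub>v v2"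
   and indep: "\<And>c1 c2. c1 \<cdot>\<^sub>v v1 + c2 \<cdot>\<^sub>v v2 = 0\<^sub>v n \<Longrightarrow> c1 = 0 \<and> c2 = 0"
  shows "2 \<le> order r (char_poly M)"
proof -
  obtain as where "char_poly M = (\<Prod>a\<leftarrow>as. [:- a, 1:])" using char_poly_factorized[OF M] by auto
  then obtain n_as where jnf: "jordan_nf M n_as" using jordan_nf_exists[OF M] by blast
  have ord: "order r (char_poly M) = sum_list (map fst (filter (\<lambda>na. snd na = r) n_as))"
    by (rule jordan_nf_order[OF jnf])
  have dg: "dim_gen_eigenspace M r 1 = (\<Sum>n \<leftarrow> map fst [(n,e)\<leftarrow>n_as. e = r]. min 1 n)"
    by (rule dim_gen_eigenspace[OF jnf])
  define C where "C = char_matrix M r"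
  have C: "C \<in> carrier_mat n n" unfolding C_def using M by simp
  have "dim_gen_eigenspace M r 1 = kernel_dim C" unfolding dim_gen_eigenspace_def C_def
    using C C_def by simp
  interpret K: kernel n n C by unfold_locales (rule C)
  have kd: "kernel_dim C = K.dim" by simp
  have v12: "v1 \<noteq> v2"
  proof
    assume "v1 = v2"
    hence "1 \<cdot>\<^sub>v v1 + (-1) \<cdot>\<^sub>v v2 = 0\<^sub>v n" using v by (intro eq_vecI) auto
    from indep[OF this] show False by simp
  qed
  have v10: "v1 \<noteq> 0\<^sub>v n"
  proof
    assume "v1 = 0\<^sub>v n"
    hence "1 \<cdot>\<^sub>v v1 + 0 \<cdot>\<^sub>v v2 = 0\<^sub>v n" using v by (intro eq_vecI) auto
    from indep[OF this] show False by simp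
  qed
  have v20: "v2 \<noteq> 0\<^sub>v n"
  proof
    assume "v2 = 0\<^sub>v n"
    hence "0 \<cdot>\<^sub>v v1 + 1 \<cdot>\<^sub>v v2 = 0\<^sub>v n" using v by (intro eq_vecI) auto
    from indep[OF this] show False by simp
  qed
  have "eigenvector M v1 r" unfolding eigenvector_def using v e1 v10 M by auto
  hence k1: "v1 \<in> mat_kernel C" unfolding eigenvector_char_matrix[OF M] C_def
    using C_def C by (auto intro: mat_kernelI)
  have "eigenvector M v2 r" unfolding eigenvector_def using v e2 v20 M by auto
  hence k2: "v2 \<in> mat_kernel C" unfolding eigenvector_char_matrix[OF M] C_def
    using C_def C by (auto intro: mat_kernelI)
  obtain B where B: "finite B" "K.basis B" using kernel_basis_exists[OF C] by blast
  have fd: "K.Ker.fin_dim" unfolding K.Ker.fin_dim_def using B unfolding K.Ker.basis_def by blast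
  have sub: "{v1,v2} \<subseteq> mat_kernel C" using k1 k2 by auto
  have li: "K.lin_indpt {v1,v2}"
  proof (rule K.Ker.finite_lin_indpt2)
    show "finite {v1,v2}" by simp
    show "{v1,v2} \<subseteq> mat_kernel C" by fact
    fix a assume a: "a \<in> {v1,v2} \<rightarrow> UNIV" and lc: "K.lincomb a {v1,v2} = 0\<^sub>v n"
    have "K.lincomb a ({v2} \<union> {v1}) = a v1 \<cdot>\<^sub>v v1 + K.lincomb a {v2}"
      by (rule K.Ker.lincomb_insert) (use k1 k2 v12 in auto)
    also have "K.lincomb a {v2} = a v2 \<cdot>\<^sub>v v2"
      unfolding K.Ker.lincomb_def using k2 by simp
    finally have "a v1 \<cdot>\<^sub>v v1 + a v2 \<cdot>\<^sub>v v2 = 0\<^sub>v n" using lc by (simp add: insert_commute)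
    from indep[OF this] show "\<forall>v\<in>{v1,v2}. a v = 0" by auto
  qed
  have "card {v1,v2} \<le> K.dim" by (rule K.Ker.li_le_dim(2)[OF fd sub li])
  hence "2 \<le> K.dim" using v12 by simp
  thus ?thesis using ord dg sum_min1_le[of r n_as] kd
    \<open>dim_gen_eigenspace M r 1 = kernel_dim C\<close> by linarith
qed


definition mv :: "nat \<Rightarrow> (nat \<Rightarrow> nat \<Rightarrow> real) \<Rightarrow> (nat \<Rightarrow> real) \<Rightarrow> nat \<Rightarrow> real" where
  "mv n H x = (\<lambda>i. \<Sum>j<n. H i j * x j)"
definition ip :: "nat \<Rightarrow> (nat \<Rightarrow> real) \<Rightarrow> (nat \<Rightarrow> real) \<Rightarrow> real" where
  "ip n x y = (\<Sum>i<n. x i * y i)"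
definition qf :: "nat \<Rightarrow> (nat \<Rightarrow> nat \<Rightarrow> real) \<Rightarrow> (nat \<Rightarrow> real) \<Rightarrow> real" where
  "qf n H x = ip n x (mv n H x)"
definition symm :: "nat \<Rightarrow> (nat \<Rightarrow> nat \<Rightarrow> real) \<Rightarrow> bool" where
  "symm n H \<longleftrightarrow> (\<forall>i<n. \<forall>j<n. H i j = H j i)"

lemma ip_comm: "ip n x y = ip n y x"
  unfolding ip_def by (simp add: mult.commute)

lemma ip_lin_right: "ip n x (\<lambda>i. a * y i + b * z i) = a * ip n x y + b * ip n x z"
  unfolding ip_def by (simp add: sum.distrib sum_distrib_left algebra_simps)

lemma ip_lin_left: "ip n (\<lambda>i. a * y i + b * z i) x = a * ip n y x + b * ip n z x"
  using ip_lin_right ip_comm by metis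

lemma mv_lin: "mv n H (\<lambda>i. a * y i + b * z i) = (\<lambda>i. a * mv n H y i + b * mv n H z i)"
  unfolding mv_def by (auto simp: sum.distrib sum_distrib_left algebra_simps)

lemma ip_nonneg: "0 \<le> ip n x x"
  unfolding ip_def by (auto intro: sum_nonneg)

lemma ip_zero: "ip n x x = 0 \<Longrightarrow> i < n \<Longrightarrow> x i = 0"
  unfolding ip_def by (subst (asm) sum_nonneg_eq_0_iff) auto

lemma bil_sym: assumes "symm n H" shows "ip n x (mv n H y) = ip n y (mv n H x)"
proof -
  have "ip n x (mv n H y) = (\<Sum>i<n. \<Sum>j<n. x i * H i j * y j)"
    unfolding ip_def mv_def by (simp add: sum_distrib_left mult.assoc)
  also have "\<dots> = (\<Sum>j<n. \<Sum>i<n. x i * H i j * y j)" by (rule sum.swap)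
  also have "\<dots> = (\<Sum>j<n. \<Sum>i<n. y j * H j i * x i)"
    using assms unfolding symm_def by (intro sum.cong refl) (auto simp: mult_ac)
  also have "\<dots> = ip n y (mv n H x)"
    unfolding ip_def mv_def by (simp add: sum_distrib_left mult.assoc)
  finally show ?thesis .
qed

lemma qf_expand: assumes "symm n H"
  shows "qf n H (\<lambda>i. a * x i + b * y i) = a^2 * qf n H x + 2 * a * b * ip n x (mv n H y) + b^2 * qf n H y"
proof -
  have "qf n H (\<lambda>i. a * x i + b * y i) = a * (a * qf n H x + b * ip n y (mv n H x)) + b * (a * ip n x (mv n H y) + b * qf n H y)"
    unfolding qf_def mv_lin ip_lin_right ip_lin_left by simp
  also have "ip n y (mv n H x) = ip n x (mv n H y)" using bil_sym[OF assms] by simp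
  finally show ?thesis by (simp add: power2_eq_square algebra_simps)
qed

lemma ip_expand: "ip n (\<lambda>i. a * x i + b * y i) (\<lambda>i. a * x i + b * y i) = a^2 * ip n x x + 2 * a * b * ip n x y + b^2 * ip n y y"
  unfolding ip_lin_right ip_lin_left using ip_comm[of n x y]
  by (simp add: power2_eq_square algebra_simps)

lemma quad_nonneg_lin0:
  fixes b g :: real
  assumes "\<And>t. 0 \<le> 2 * t * b + t^2 * g" and "0 \<le> g"
  shows "b = 0"
proof (rule ccontr)
  assume b: "b \<noteq> 0"
  define t where "t = - b / (g + 1)"
  have g1: "g + 1 > 0" using assms by simp
  have "0 \<le> 2 * t * b + t^2 * g" by (rule assms)
  hence "0 \<le> (2 * t * b + t^2 * g) * (g+1)^2" using g1 by simp
  also have "(2 * t * b + t^2 * g) * (g+1)^2 = 2 * b * (t * (g+1)) * (g+1) + (t * (g+1))^2 * g"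
    by (simp add: power2_eq_square algebra_simps)
  also have "t * (g+1) = - b" unfolding t_def using g1 by simp
  also have "2 * b * (- b) * (g+1) + (- b)^2 * g = b^2 * (- g - 2)"
    by (simp add: power2_eq_square algebra_simps)
  finally have "0 \<le> b^2 * (- g - 2)" .
  moreover have "b^2 > 0" using b by simp
  ultimately show False using assms(2) by (simp add: zero_le_mult_iff)
qed

lemma lagr:
  assumes S: "symm n H" and bound: "\<And>x. qf n H x \<le> m * ip n x x" and z: "qf n H z = m * ip n z z"
  shows "\<forall>i<n. mv n H z i = m * z i"
proof -
  define w where "w = (\<lambda>i. m * z i - mv n H z i)"
  define b where "b = ip n w w"
  define g where "g = m * ip n w w - qf n H w"
  have g0: "0 \<le> g" using bound[of w] unfolding g_def by simp
  have bw: "m * ip n w z - ip n w (mv n H z) = b"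
  proof -
    have "ip n w w = ip n w (\<lambda>i. m * z i + (-1) * mv n H z i)" unfolding w_def by simp
    also have "\<dots> = m * ip n w z - ip n w (mv n H z)" unfolding ip_lin_right by simp
    finally show ?thesis unfolding b_def by simp
  qed
  have "0 \<le> 2 * t * b + t^2 * g" for t
  proof -
    have "qf n H (\<lambda>i. 1 * z i + t * w i) \<le> m * ip n (\<lambda>i. 1 * z i + t * w i) (\<lambda>i. 1 * z i + t * w i)"
      by (rule bound)
    hence "qf n H z + 2 * t * ip n z (mv n H w) + t^2 * qf n H w \<le> m * (ip n z z + 2 * t * ip n z w + t^2 * ip n w w)"
      unfolding qf_expand[OF S] ip_expand by simp
    moreover have "ip n z (mv n H w) = ip n w (mv n H z)" by (rule bil_sym[OF S])
    moreover have "ip n z w = ip n w z" by (rule ip_comm)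
    ultimately have "0 \<le> 2 * t * (m * ip n w z - ip n w (mv n H z)) + t^2 * (m * ip n w w - qf n H w)"
      using z by (simp add: algebra_simps)
    thus ?thesis unfolding bw g_def .
  qed
  from quad_nonneg_lin0[OF this g0] have "b = 0" .
  hence "\<And>i. i < n \<Longrightarrow> w i = 0" unfolding b_def using ip_zero by blast
  thus ?thesis unfolding w_def by simp
qed

lemma coord_cont[continuous_intros]: "continuous_on A (\<lambda>x::nat\<Rightarrow>real. x i)"
  by (rule continuous_on_subset[OF continuous_on_product_coordinates subset_UNIV])

lemma exists_max:
  assumes n: "n \<ge> 1" and S: "symm n H"
  shows "\<exists>m z. ip n z z = 1 \<and> (\<forall>x. qf n H x \<le> m * ip n x x) \<and> (\<forall>i<n. mv n H z i = m * z i)"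
proof -
  define B where "B = (\<lambda>i::nat. if i < n then {-1..1::real} else {0})"
  define T where "T = PiE UNIV B \<inter> {x. ip n x x = 1}"
  have "compactin (product_topology (\<lambda>i. euclidean) UNIV) (PiE UNIV B)"
    by (subst compactin_PiE) (auto simp: B_def)
  hence c1: "compact (PiE UNIV B)" by (simp add: euclidean_product_topology)
  have cont_ip: "continuous_on A (\<lambda>x::nat\<Rightarrow>real. ip n x x)" for A
    unfolding ip_def by (intro continuous_intros)
  have "closed {x::nat\<Rightarrow>real. ip n x x = 1}"
    by (rule closed_Collect_eq) (auto intro: cont_ip)
  with c1 have cT: "compact T" unfolding T_def by (rule compact_Int_closed)
  define e0 where "e0 = (\<lambda>i::nat. if i = 0 then 1 else (0::real))"
  have "e0 \<in> T" unfolding T_def B_def e0_def ip_def using n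
    by (auto simp: PiE_def extensional_def sum.remove[of "{..<n}" 0])
  hence Tne: "T \<noteq> {}" by auto
  have cont_qf: "continuous_on T (qf n H)"
    unfolding qf_def ip_def mv_def by (intro continuous_intros)
  from continuous_attains_sup[OF cT Tne cont_qf] obtain z where zT: "z \<in> T" and zmax: "\<And>y. y \<in> T \<Longrightarrow> qf n H y \<le> qf n H z"
    by blast
  define m where "m = qf n H z"
  have z1: "ip n z z = 1" using zT unfolding T_def by auto
  have bound: "qf n H x \<le> m * ip n x x" for x
  proof (cases "ip n x x = 0")
    case True
    hence "\<And>i. i < n \<Longrightarrow> x i = 0" using ip_zero by blast
    hence "qf n H x = 0" unfolding qf_def ip_def by simp
    thus ?thesis using True by simp
  next
    case False
    hence pos: "ip n x x > 0" using ip_nonneg[of n x] by simp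
    define s where "s = sqrt (ip n x x)"
    have s: "s > 0" "s^2 = ip n x x" unfolding s_def using pos by auto
    define y where "y = (\<lambda>i. if i < n then x i / s else 0)"
    have yx: "\<And>i. i < n \<Longrightarrow> y i = (1/s) * x i + 0 * x i" unfolding y_def by simp
    have "ip n y y = ip n (\<lambda>i. (1/s) * x i + 0 * x i) (\<lambda>i. (1/s) * x i + 0 * x i)"
      unfolding ip_def using yx by (intro sum.cong) auto
    also have "\<dots> = ip n x x / s^2" unfolding ip_expand by (simp add: power2_eq_square)
    finally have yy: "ip n y y = 1" using s pos by simp
    have yb: "\<And>i. \<bar>y i\<bar> \<le> 1"
    proof -
      fix i show "\<bar>y i\<bar> \<le> 1"
      proof (cases "i < n")
        case True
        have "(y i)^2 \<le> ip n y y" unfolding ip_def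
          using True member_le_sum[of i "{..<n}" "\<lambda>j. y j * y j"] by (simp add: power2_eq_square)
        thus ?thesis using yy abs_le_square_iff[of "y i" 1] by simp
      qed (simp add: y_def)
    qed
    have yB: "y i \<in> B i" for i
    proof (cases "i < n")
      case True thus ?thesis using yb[of i] unfolding B_def by (simp add: abs_le_iff)
    qed (simp add: B_def y_def)
    have "y \<in> T" unfolding T_def using yy yB by (auto simp: PiE_def extensional_def)
    hence "qf n H y \<le> m" unfolding m_def by (rule zmax)
    moreover have "qf n H y = qf n H (\<lambda>i. (1/s) * x i + 0 * x i)"
      unfolding qf_def ip_def mv_def using yx by (intro sum.cong refl) (auto intro!: sum.cong)
    moreover have "\<dots> = qf n H x / s^2" unfolding qf_expand[OF S] by (simp add: power2_eq_square)
    ultimately have "qf n H x / s^2 \<le> m" by simp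
    thus ?thesis using s pos by (simp add: field_simps)
  qed
  have "\<forall>i<n. mv n H z i = m * z i"
    by (rule lagr[OF S bound]) (simp add: z1 m_def)
  with z1 bound show ?thesis by blast
qed



lemma cs_psd:
  assumes S: "symm n H" and psd: "\<And>x. 0 \<le> qf n H x" and p: "qf n H p > 0"
  shows "(ip n y (mv n H p))^2 \<le> qf n H y * qf n H p"
proof -
  define B where "B = ip n y (mv n H p)"
  have "0 \<le> qf n H (\<lambda>i. qf n H p * y i + (- B) * p i)" by (rule psd)
  also have "\<dots> = qf n H p * (qf n H p * qf n H y - B^2)"
    unfolding qf_expand[OF S] B_def by (simp add: power2_eq_square algebra_simps)
  finally have "0 \<le> qf n H p * qf n H y - B^2" using p by (simp add: zero_le_mult_iff)
  thus ?thesis unfolding B_def by (simp add: algebra_simps)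
qed

lemma rcs:
  assumes S: "symm n H" and p: "qf n H p > 0"
    and nopos: "\<And>w. ip n w z = 0 \<Longrightarrow> qf n H w \<le> 0"
  shows "qf n H y * qf n H p \<le> (ip n y (mv n H p))^2"
proof (rule ccontr)
  define B where "B = ip n y (mv n H p)"
  define Qy where "Qy = qf n H y"
  define Qp where "Qp = qf n H p"
  assume "\<not> ?thesis"
  hence lt: "B^2 < Qy * Qp" unfolding B_def Qy_def Qp_def by simp
  define \<alpha> where "\<alpha> = ip n p z"
  define \<beta> where "\<beta> = - ip n y z"
  define w where "w = (\<lambda>i. \<alpha> * y i + \<beta> * p i)"
  have "ip n w z = \<alpha> * ip n y z + \<beta> * ip n p z" unfolding w_def ip_lin_left ..
  also have "\<dots> = 0" unfolding \<alpha>_def \<beta>_def by simp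
  finally have "qf n H w \<le> 0" by (rule nopos)
  moreover have qw: "qf n H w = \<alpha>^2 * Qy + 2 * \<alpha> * \<beta> * B + \<beta>^2 * Qp"
    unfolding w_def qf_expand[OF S] B_def Qy_def Qp_def ..
  moreover have Qp0: "Qp > 0" using p Qp_def by simp
  moreover have "Qp * (\<alpha>^2 * Qy + 2 * \<alpha> * \<beta> * B + \<beta>^2 * Qp) = (\<alpha> * B + \<beta> * Qp)^2 + \<alpha>^2 * (Qy * Qp - B^2)"
    by (simp add: power2_eq_square algebra_simps)
  ultimately have A: "(\<alpha> * B + \<beta> * Qp)^2 + \<alpha>^2 * (Qy * Qp - B^2) \<le> 0"
    by (metis mult_le_0_iff less_le_not_le)
  have "\<alpha> = 0"
  proof (rule ccontr)
    assume "\<alpha> \<noteq> 0"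
    hence "\<alpha>^2 * (Qy * Qp - B^2) > 0" using lt by simp
    moreover have "(\<alpha> * B + \<beta> * Qp)^2 \<ge> 0" by simp
    ultimately show False using A by linarith
  qed
  have "qf n H p \<le> 0" using nopos[of p] \<open>\<alpha> = 0\<close> unfolding \<alpha>_def by simp
  thus False using p by simp
qed

definition hm :: "(nat \<Rightarrow> nat \<Rightarrow> real) \<Rightarrow> (nat \<Rightarrow> real) \<Rightarrow> nat \<Rightarrow> nat \<Rightarrow> real" where
  "hm a \<eta> = (\<lambda>i j. sqrt (\<eta> i) * a i j * sqrt (\<eta> j))"

lemma qf_hm: "qf n (hm a \<eta>) x = qf n a (\<lambda>i. sqrt (\<eta> i) * x i)"
  unfolding qf_def ip_def mv_def hm_def
  by (intro sum.cong refl) (simp add: sum_distrib_left mult_ac)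

lemma symm_hm: "symm n a \<Longrightarrow> symm n (hm a \<eta>)"
  unfolding symm_def hm_def by (simp add: mult_ac)

lemma qf_abs:
  assumes "\<And>i j. i < n \<Longrightarrow> j < n \<Longrightarrow> H i j \<ge> 0"
  shows "qf n H x \<le> qf n H (\<lambda>i. \<bar>x i\<bar>)"
proof -
  have "qf n H x = (\<Sum>i<n. \<Sum>j<n. x i * H i j * x j)"
    unfolding qf_def ip_def mv_def by (simp add: sum_distrib_left mult.assoc)
  also have "\<dots> \<le> (\<Sum>i<n. \<Sum>j<n. \<bar>x i\<bar> * H i j * \<bar>x j\<bar>)"
  proof (intro sum_mono)
    fix i j assume "i \<in> {..<n}" "j \<in> {..<n}"
    hence h: "H i j \<ge> 0" using assms by auto
    have "x i * H i j * x j \<le> \<bar>x i * H i j * x j\<bar>" by simp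
    also have "\<dots> = \<bar>x i\<bar> * H i j * \<bar>x j\<bar>" using h by (simp add: abs_mult)
    finally show "x i * H i j * x j \<le> \<bar>x i\<bar> * H i j * \<bar>x j\<bar>" .
  qed
  also have "\<dots> = qf n H (\<lambda>i. \<bar>x i\<bar>)"
    unfolding qf_def ip_def mv_def by (simp add: sum_distrib_left mult.assoc)
  finally show ?thesis .
qed

lemma ip_abs: "ip n (\<lambda>i. \<bar>x i\<bar>) (\<lambda>i. \<bar>x i\<bar>) = ip n x x"
  unfolding ip_def by (simp add: abs_mult_self_eq)

lemma qf_hm_mono:
  assumes a: "\<And>i j. i < n \<Longrightarrow> j < n \<Longrightarrow> a i j \<ge> 0"
    and c: "c \<ge> 0" and le: "\<And>i. i < n \<Longrightarrow> c * \<eta> i \<le> \<eta>' i" and \<eta>: "\<And>i. i < n \<Longrightarrow> \<eta> i \<ge> 0"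
    and x: "\<And>i. i < n \<Longrightarrow> x i \<ge> 0"
  shows "c * qf n (hm a \<eta>) x \<le> qf n (hm a \<eta>') x"
proof -
  have "c * qf n (hm a \<eta>) x = (\<Sum>i<n. \<Sum>j<n. x i * (sqrt (c * \<eta> i) * a i j * sqrt (c * \<eta> j)) * x j)"
  proof -
    have "c * qf n (hm a \<eta>) x = (\<Sum>i<n. \<Sum>j<n. c * (x i * (sqrt (\<eta> i) * a i j * sqrt (\<eta> j)) * x j))"
      unfolding qf_def ip_def mv_def hm_def by (simp add: sum_distrib_left mult.assoc)
    also have "\<dots> = (\<Sum>i<n. \<Sum>j<n. x i * (sqrt (c * \<eta> i) * a i j * sqrt (c * \<eta> j)) * x j)"
    proof (intro sum.cong refl)
      fix i j
      have "sqrt (c * \<eta> i) * a i j * sqrt (c * \<eta> j) = (sqrt c * sqrt c) * (sqrt (\<eta> i) * a i j * sqrt (\<eta> j))"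
        unfolding real_sqrt_mult by (simp only: mult_ac)
      also have "sqrt c * sqrt c = c" using c by simp
      finally have F: "sqrt (c * \<eta> i) * a i j * sqrt (c * \<eta> j) = c * (sqrt (\<eta> i) * a i j * sqrt (\<eta> j))" .
      show "c * (x i * (sqrt (\<eta> i) * a i j * sqrt (\<eta> j)) * x j) = x i * (sqrt (c * \<eta> i) * a i j * sqrt (c * \<eta> j)) * x j"
        unfolding F by (simp only: mult_ac)
    qed
    finally show ?thesis .
  qed
  also have "\<dots> \<le> (\<Sum>i<n. \<Sum>j<n. x i * (sqrt (\<eta>' i) * a i j * sqrt (\<eta>' j)) * x j)"
  proof (intro sum_mono)
    fix i j assume ij: "i \<in> {..<n}" "j \<in> {..<n}"
    have "sqrt (c * \<eta> i) \<le> sqrt (\<eta>' i)" using le ij by simp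
    moreover have "sqrt (c * \<eta> j) \<le> sqrt (\<eta>' j)" using le ij by simp
    moreover have "0 \<le> sqrt (c * \<eta> i)" "0 \<le> sqrt (c * \<eta> j)" using c \<eta> ij by auto
    ultimately have "sqrt (c * \<eta> i) * sqrt (c * \<eta> j) \<le> sqrt (\<eta>' i) * sqrt (\<eta>' j)"
      by (intro mult_mono) auto
    hence "(sqrt (c * \<eta> i) * sqrt (c * \<eta> j)) * (a i j * (x i * x j)) \<le> (sqrt (\<eta>' i) * sqrt (\<eta>' j)) * (a i j * (x i * x j))"
      using a x ij by (intro mult_right_mono) auto
    thus "x i * (sqrt (c * \<eta> i) * a i j * sqrt (c * \<eta> j)) * x j \<le> x i * (sqrt (\<eta>' i) * a i j * sqrt (\<eta>' j)) * x j"
      by (simp add: mult_ac)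
  qed
  also have "\<dots> = qf n (hm a \<eta>') x"
    unfolding qf_def ip_def mv_def hm_def by (simp add: sum_distrib_left mult.assoc)
  finally show ?thesis .
qed

lemma cs_ip: "(ip n x y)^2 \<le> ip n x x * ip n y y"
  using Cauchy_Schwarz_ineq_sum[of x y "{..<n}"] by (simp add: ip_def power2_eq_square)



lemma KD_entry:
  assumes K: "K \<in> carrier_mat n n" and i: "i < n" and j: "j < n"
  shows "(K * mat_diag n \<eta>) $$ (i,j) = K $$ (i,j) * \<eta> j"
proof -
  have "(K * mat_diag n \<eta>) $$ (i,j) = (\<Sum>k\<in>{0..<n}. K $$ (i,k) * (if k = j then \<eta> j else 0))"
    using K i j by (simp add: mat_diag_def scalar_prod_def)
  also have "\<dots> = K $$ (i,j) * \<eta> j"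
    using j by (simp add: if_distrib[of "\<lambda>x. K $$ (i, _) * x"] cong: if_cong)
  finally show ?thesis .
qed

lemma KD_carrier: "K \<in> carrier_mat n n \<Longrightarrow> K * mat_diag n \<eta> \<in> carrier_mat n n"
  by simp

lemma eig_real_vec_eq:
  assumes M: "M \<in> carrier_mat n n" and e: "\<And>i. i < n \<Longrightarrow> (\<Sum>j<n. M $$ (i,j) * w j) = c * w i"
  shows "cmat M *\<^sub>v vec n (\<lambda>i. complex_of_real (w i)) = complex_of_real c \<cdot>\<^sub>v vec n (\<lambda>i. complex_of_real (w i))"
proof -
  define v where "v = vec n (\<lambda>i. complex_of_real (w i))"
  have "cmat M *\<^sub>v v = complex_of_real c \<cdot>\<^sub>v v"
  proof (rule eq_vecI)
    fix i assume "i < dim_vec (complex_of_real c \<cdot>\<^sub>v v)"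
    hence i: "i < n" unfolding v_def by simp
    have "(cmat M *\<^sub>v v) $ i = (\<Sum>j\<in>{0..<n}. complex_of_real (M $$ (i,j)) * complex_of_real (w j))"
      using M i by (simp add: cmat_def mult_mat_vec_def scalar_prod_def v_def)
    also have "\<dots> = complex_of_real (\<Sum>j<n. M $$ (i,j) * w j)"
      by (simp add: atLeast0LessThan)
    also have "\<dots> = complex_of_real (c * w i)" using e[OF i] by simp
    also have "\<dots> = (complex_of_real c \<cdot>\<^sub>v v) $ i" using i by (simp add: v_def)
    finally show "(cmat M *\<^sub>v v) $ i = (complex_of_real c \<cdot>\<^sub>v v) $ i" .
  qed (use M in \<open>simp add: cmat_def v_def\<close>)
  thus ?thesis unfolding v_def .
qed

lemma eig_real_vec:
  assumes M: "M \<in> carrier_mat n n" and e: "\<And>i. i < n \<Longrightarrow> (\<Sum>j<n. M $$ (i,j) * w j) = c * w i"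
    and nz: "i0 < n" "w i0 \<noteq> 0"
  shows "eigenvalue (cmat M) (complex_of_real c)"
proof -
  define v where "v = vec n (\<lambda>i. complex_of_real (w i))"
  have "cmat M *\<^sub>v v = complex_of_real c \<cdot>\<^sub>v v" unfolding v_def by (rule eig_real_vec_eq[OF M e])
  moreover have "v \<noteq> 0\<^sub>v n"
  proof
    assume "v = 0\<^sub>v n"
    hence "v $ i0 = 0" using nz by simp
    thus False using nz unfolding v_def by simp
  qed
  moreover have "v \<in> carrier_vec n" unfolding v_def by simp
  ultimately show ?thesis unfolding eigenvalue_def eigenvector_def using M
    by (auto simp: cmat_def)
qed

lemma eig_to_vec:
  assumes M: "M \<in> carrier_mat n n" and ev: "eigenvalue (cmat M) \<mu>"
  shows "\<exists>v. (\<exists>i<n. v i \<noteq> 0) \<and> (\<forall>i<n. (\<Sum>j<n. complex_of_real (M $$ (i,j)) * v j) = \<mu> * v i)"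
proof -
  from ev obtain v where v: "v \<in> carrier_vec n" "v \<noteq> 0\<^sub>v n" "cmat M *\<^sub>v v = \<mu> \<cdot>\<^sub>v v"
    unfolding eigenvalue_def eigenvector_def using M by (auto simp: cmat_def)
  have "\<exists>i<n. v $ i \<noteq> 0"
  proof (rule ccontr)
    assume "\<not> ?thesis"
    hence "v = 0\<^sub>v n" using v by (intro eq_vecI) auto
    thus False using v by simp
  qed
  moreover have "(\<Sum>j<n. complex_of_real (M $$ (i,j)) * v $ j) = \<mu> * v $ i" if i: "i < n" for i
  proof -
    have "(cmat M *\<^sub>v v) $ i = (\<mu> \<cdot>\<^sub>v v) $ i" using v by simp
    thus ?thesis using M i v by (simp add: cmat_def mult_mat_vec_def scalar_prod_def atLeast0LessThan)
  qed
  ultimately show ?thesis by (intro exI[of _ "\<lambda>i. v $ i"]) auto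
qed

lemma complex_rayleigh:
  fixes y :: "nat \<Rightarrow> complex"
  assumes H: "\<And>i j. i < n \<Longrightarrow> j < n \<Longrightarrow> H i j \<ge> 0"
    and bound: "\<And>x. qf n H x \<le> m * ip n x x"
    and ev: "\<And>i. i < n \<Longrightarrow> (\<Sum>j<n. complex_of_real (H i j) * y j) = \<mu> * y i"
    and nz: "i0 < n" "y i0 \<noteq> 0"
  shows "cmod \<mu> \<le> m"
proof -
  define r where "r = (\<lambda>i. cmod (y i))"
  have rr: "ip n r r = (\<Sum>i<n. (cmod (y i))^2)" unfolding ip_def r_def by (simp add: power2_eq_square)
  have pos: "ip n r r > 0"
  proof -
    have "(cmod (y i0))^2 > 0" using nz by simp
    also have "(cmod (y i0))^2 \<le> (\<Sum>i<n. (cmod (y i))^2)"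
      using nz by (intro member_le_sum) auto
    finally show ?thesis using rr by simp
  qed
  have "\<mu> * (\<Sum>i<n. cnj (y i) * y i) = (\<Sum>i<n. cnj (y i) * (\<mu> * y i))"
    by (simp add: sum_distrib_left mult_ac)
  also have "\<dots> = (\<Sum>i<n. cnj (y i) * (\<Sum>j<n. complex_of_real (H i j) * y j))"
    using ev by simp
  finally have eq: "\<mu> * (\<Sum>i<n. cnj (y i) * y i) = (\<Sum>i<n. \<Sum>j<n. cnj (y i) * complex_of_real (H i j) * y j)"
    by (simp add: sum_distrib_left mult.assoc)
  have "(\<Sum>i<n. cnj (y i) * y i) = complex_of_real (ip n r r)"
    unfolding rr of_real_sum by (intro sum.cong refl) (metis complex_norm_square of_real_power mult.commute)
  hence E: "cmod (\<mu> * (\<Sum>i<n. cnj (y i) * y i)) = cmod \<mu> * ip n r r"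
    using pos by (simp add: norm_mult)
  have "cmod \<mu> * ip n r r = cmod (\<Sum>i<n. \<Sum>j<n. cnj (y i) * complex_of_real (H i j) * y j)"
    using eq E by simp
  also have "\<dots> \<le> (\<Sum>i<n. \<Sum>j<n. cmod (cnj (y i) * complex_of_real (H i j) * y j))"
    by (rule order_trans[OF norm_sum sum_mono[OF norm_sum]])
  also have "\<dots> = (\<Sum>i<n. \<Sum>j<n. r i * H i j * r j)"
    using H by (intro sum.cong refl) (simp add: norm_mult r_def)
  also have "\<dots> = qf n H r"
    unfolding qf_def ip_def mv_def by (simp add: sum_distrib_left mult.assoc)
  also have "\<dots> \<le> m * ip n r r" by (rule bound)
  finally show ?thesis using pos by simp
qed



locale sdata =
  fixes N :: nat and K :: "real mat" and d :: "nat \<Rightarrow> real" and a :: "nat \<Rightarrow> nat \<Rightarrow> real"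
  assumes N: "N \<ge> 1" and K: "K \<in> carrier_mat N N" and d: "\<And>i. i < N \<Longrightarrow> d i > 0"
    and Ka: "\<And>i j. i < N \<Longrightarrow> j < N \<Longrightarrow> K $$ (i,j) = sqrt (d i) * a i j / sqrt (d j)"
    and a_nonneg: "\<And>i j. i < N \<Longrightarrow> j < N \<Longrightarrow> a i j \<ge> 0" and a_sym: "symm N a"
begin

lemma K_sum:
  assumes i: "i < N"
  shows "(\<Sum>j<N. K $$ (i,j) * (e j * (sqrt (d j) * w j))) = sqrt (d i) * (\<Sum>j<N. a i j * e j * w j)"
proof -
  have "(\<Sum>j<N. K $$ (i,j) * (e j * (sqrt (d j) * w j))) = (\<Sum>j<N. sqrt (d i) * (a i j * e j * w j))"
  proof (intro sum.cong refl)
    fix j assume "j \<in> {..<N}"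
    hence j: "j < N" by simp
    have "sqrt (d j) > 0" using d[OF j] by simp
    thus "K $$ (i,j) * (e j * (sqrt (d j) * w j)) = sqrt (d i) * (a i j * e j * w j)"
      unfolding Ka[OF i j] by (simp add: field_simps)
  qed
  thus ?thesis by (simp add: sum_distrib_left)
qed

lemma K_eig_sum:
  assumes ev: "\<And>i. i < N \<Longrightarrow> mv N a z i = c * z i" and i: "i < N"
  shows "(\<Sum>j<N. K $$ (i,j) * (sqrt (d j) * z j)) = c * (sqrt (d i) * z i)"
proof -
  have "(\<Sum>j<N. K $$ (i,j) * (sqrt (d j) * z j)) = (\<Sum>j<N. K $$ (i,j) * ((\<lambda>_. 1) j * (sqrt (d j) * z j)))" by simp
  also have "\<dots> = sqrt (d i) * (\<Sum>j<N. a i j * 1 * z j)" by (rule K_sum[OF i])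
  also have "\<dots> = sqrt (d i) * (c * z i)" using ev[OF i] unfolding mv_def by simp
  finally show ?thesis by simp
qed

lemma eigK_eq:
  assumes ev: "\<And>i. i < N \<Longrightarrow> mv N a z i = c * z i"
  shows "cmat K *\<^sub>v vec N (\<lambda>i. complex_of_real (sqrt (d i) * z i)) = complex_of_real c \<cdot>\<^sub>v vec N (\<lambda>i. complex_of_real (sqrt (d i) * z i))"
  by (rule eig_real_vec_eq[OF K K_eig_sum[OF ev]])

lemma eigK:
  assumes ev: "\<And>i. i < N \<Longrightarrow> mv N a z i = c * z i" and nz: "i0 < N" "z i0 \<noteq> 0"
  shows "eigenvalue (cmat K) (complex_of_real c)"
  by (rule eig_real_vec[OF K K_eig_sum[OF ev], of i0]) (use nz d[OF nz(1)] in auto)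

lemma exists_nz: "ip N z z = 1 \<Longrightarrow> \<exists>i<N. z i \<noteq> 0"
  unfolding ip_def by (metis (no_types, lifting) lessThan_iff mult_zero_left sum.neutral zero_neq_one)

lemma eig_bound:
  assumes \<eta>: "\<And>i. i < N \<Longrightarrow> \<eta> i \<ge> 0" and bound: "\<And>x. qf N (hm a \<eta>) x \<le> m * ip N x x"
    and m: "m \<ge> 0" and ev: "eigenvalue (cmat (K * mat_diag N \<eta>)) \<mu>"
  shows "cmod \<mu> \<le> m"
proof (cases "\<mu> = 0")
  case True thus ?thesis using m by simp
next
  case False
  have KD: "K * mat_diag N \<eta> \<in> carrier_mat N N" using K by simp
  from eig_to_vec[OF KD ev] obtain v where v: "\<exists>i<N. v i \<noteq> 0"
    and e: "\<And>i. i < N \<Longrightarrow> (\<Sum>j<N. complex_of_real ((K * mat_diag N \<eta>) $$ (i,j)) * v j) = \<mu> * v i" by blast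
  define g where "g = (\<lambda>i j. complex_of_real (a i j * \<eta> j / sqrt (d j)))"
  have e2: "sqrt (d i) * (\<Sum>j<N. g i j * v j) = \<mu> * v i" if i: "i < N" for i
  proof -
    have "(\<Sum>j<N. complex_of_real ((K * mat_diag N \<eta>) $$ (i,j)) * v j) = (\<Sum>j<N. sqrt (d i) * (g i j * v j))"
    proof (intro sum.cong refl)
      fix j assume "j \<in> {..<N}" hence j: "j < N" by simp
      show "complex_of_real ((K * mat_diag N \<eta>) $$ (i,j)) * v j = sqrt (d i) * (g i j * v j)"
        unfolding KD_entry[OF K i j] Ka[OF i j] g_def by simp
    qed
    thus ?thesis using e[OF i] by (simp add: sum_distrib_left)
  qed
  define y where "y = (\<lambda>i. complex_of_real (sqrt (\<eta> i) / sqrt (d i)) * v i)"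
  have ey: "(\<Sum>j<N. complex_of_real (hm a \<eta> i j) * y j) = \<mu> * y i" if i: "i < N" for i
  proof -
    have "(\<Sum>j<N. complex_of_real (hm a \<eta> i j) * y j) = (\<Sum>j<N. sqrt (\<eta> i) * (g i j * v j))"
    proof (intro sum.cong refl)
      fix j assume "j \<in> {..<N}" hence j: "j < N" by simp
      have "sqrt (\<eta> j) * sqrt (\<eta> j) = \<eta> j" using \<eta>[OF j] by simp
      hence "hm a \<eta> i j * (sqrt (\<eta> j) / sqrt (d j)) = sqrt (\<eta> i) * (a i j * \<eta> j / sqrt (d j))"
        unfolding hm_def by (simp add: field_simps)
      hence "complex_of_real (hm a \<eta> i j) * complex_of_real (sqrt (\<eta> j) / sqrt (d j)) = complex_of_real (sqrt (\<eta> i)) * g i j"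
        unfolding g_def by (metis of_real_mult)
      thus "complex_of_real (hm a \<eta> i j) * y j = sqrt (\<eta> i) * (g i j * v j)"
        unfolding y_def by (metis mult.assoc)
    qed
    also have "\<dots> = sqrt (\<eta> i) * (\<Sum>j<N. g i j * v j)" by (simp add: sum_distrib_left)
    also have "(\<Sum>j<N. g i j * v j) = \<mu> * v i / sqrt (d i)"
      using e2[OF i] d[OF i] by (simp add: field_simps)
    finally show ?thesis unfolding y_def by (simp add: field_simps)
  qed
  from v obtain i where i: "i < N" "v i \<noteq> 0" by blast
  have "(\<Sum>j<N. g i j * v j) \<noteq> 0" using e2[OF i(1)] False i(2) by auto
  then obtain j where j: "j < N" "g i j * v j \<noteq> 0" by (meson lessThan_iff sum.neutral)
  hence "\<eta> j \<noteq> 0" "v j \<noteq> 0" unfolding g_def by auto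
  hence yj: "y j \<noteq> 0" using \<eta>[OF j(1)] d[OF j(1)] unfolding y_def by simp
  have H: "\<And>i j. i < N \<Longrightarrow> j < N \<Longrightarrow> hm a \<eta> i j \<ge> 0" unfolding hm_def using a_nonneg \<eta> by simp
  show ?thesis by (rule complex_rayleigh[OF H bound ey j(1) yj])
qed

lemma u_fact1:
  assumes \<eta>: "\<And>i. i < N \<Longrightarrow> \<eta> i \<ge> 0" and m: "m > 0"
    and ev: "\<And>i. i < N \<Longrightarrow> mv N (hm a \<eta>) z i = m * z i"
    and u_def: "u = (\<lambda>i. (\<Sum>j<N. a i j * sqrt (\<eta> j) * z j) / m)"
    and i: "i < N"
  shows "sqrt (\<eta> i) * u i = z i"
proof -
  have "sqrt (\<eta> i) * (\<Sum>j<N. a i j * sqrt (\<eta> j) * z j) = mv N (hm a \<eta>) z i"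
    unfolding mv_def hm_def by (simp add: sum_distrib_left mult_ac)
  thus ?thesis using ev[OF i] m unfolding u_def by simp
qed

lemma u_fact2:
  assumes \<eta>: "\<And>i. i < N \<Longrightarrow> \<eta> i \<ge> 0" and m: "m > 0"
    and ev: "\<And>i. i < N \<Longrightarrow> mv N (hm a \<eta>) z i = m * z i"
    and u_def: "u = (\<lambda>i. (\<Sum>j<N. a i j * sqrt (\<eta> j) * z j) / m)"
    and i: "i < N"
  shows "(\<Sum>j<N. a i j * \<eta> j * u j) = m * u i"
proof -
  note U1 = u_fact1[of \<eta> m z u, OF \<eta> m ev u_def]
  have "(\<Sum>j<N. a i j * \<eta> j * u j) = (\<Sum>j<N. a i j * sqrt (\<eta> j) * (sqrt (\<eta> j) * u j))"
  proof (intro sum.cong refl)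
    fix j assume "j \<in> {..<N}" hence j: "j < N" by simp
    have "sqrt (\<eta> j) * sqrt (\<eta> j) = \<eta> j" using \<eta>[OF j] by simp
    thus "a i j * \<eta> j * u j = a i j * sqrt (\<eta> j) * (sqrt (\<eta> j) * u j)"
      by (metis mult.assoc)
  qed
  also have "\<dots> = (\<Sum>j<N. a i j * sqrt (\<eta> j) * z j)" using U1 by simp
  also have "\<dots> = m * u i" unfolding u_def using m by simp
  finally show ?thesis .
qed

end


context sdata begin

lemma eig_attained:
  assumes \<eta>: "\<And>i. i < N \<Longrightarrow> \<eta> i \<ge> 0" and m: "m > 0"
    and ev: "\<And>i. i < N \<Longrightarrow> mv N (hm a \<eta>) z i = m * z i" and z1: "ip N z z = 1"
  shows "eigenvalue (cmat (K * mat_diag N \<eta>)) (complex_of_real m)"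
proof -
  define u where "u = (\<lambda>i. (\<Sum>j<N. a i j * sqrt (\<eta> j) * z j) / m)"
  have U1: "\<And>i. i < N \<Longrightarrow> sqrt (\<eta> i) * u i = z i"
    by (rule u_fact1[of \<eta> m z u]) (simp_all add: \<eta> m ev u_def)
  have U2: "\<And>i. i < N \<Longrightarrow> (\<Sum>j<N. a i j * \<eta> j * u j) = m * u i"
    by (rule u_fact2[of \<eta> m z u]) (simp_all add: \<eta> m ev u_def)
  have KD: "K * mat_diag N \<eta> \<in> carrier_mat N N" using K by simp
  from exists_nz[OF z1] obtain i0 where i0: "i0 < N" "z i0 \<noteq> 0" by blast
  have "u i0 \<noteq> 0" using U1[OF i0(1)] i0(2) by auto
  hence nz: "sqrt (d i0) * u i0 \<noteq> 0" using d[OF i0(1)] by simp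
  show ?thesis
  proof (rule eig_real_vec[of _ _ "\<lambda>i. sqrt (d i) * u i" m i0, OF KD _ i0(1) nz])
    fix i assume i: "i < N"
    have "(\<Sum>j<N. (K * mat_diag N \<eta>) $$ (i,j) * (sqrt (d j) * u j)) = (\<Sum>j<N. K $$ (i,j) * (\<eta> j * (sqrt (d j) * u j)))"
      by (intro sum.cong refl) (simp add: KD_entry[OF K i])
    also have "\<dots> = sqrt (d i) * (\<Sum>j<N. a i j * \<eta> j * u j)" by (rule K_sum[OF i])
    also have "\<dots> = m * (sqrt (d i) * u i)" using U2[OF i] by simp
    finally show "(\<Sum>j<N. (K * mat_diag N \<eta>) $$ (i,j) * (sqrt (d j) * u j)) = m * (sqrt (d i) * u i)" .
  qed
qed

lemma qf_nonneg_abs: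
  assumes H: "\<And>i j. i < n \<Longrightarrow> j < n \<Longrightarrow> H i j \<ge> 0" and x: "\<And>i. i < n \<Longrightarrow> x i \<ge> 0"
  shows "0 \<le> qf n H x"
  unfolding qf_def ip_def mv_def using H x by (intro sum_nonneg mult_nonneg_nonneg) auto

lemma hm_nonneg: "(\<And>i. i < N \<Longrightarrow> \<eta> i \<ge> 0) \<Longrightarrow> i < N \<Longrightarrow> j < N \<Longrightarrow> hm a \<eta> i j \<ge> 0"
  unfolding hm_def using a_nonneg by simp

lemma max_data:
  assumes \<eta>: "\<And>i. i < N \<Longrightarrow> \<eta> i \<ge> 0"
  shows "\<exists>m z. ip N z z = 1 \<and> (\<forall>x. qf N (hm a \<eta>) x \<le> m * ip N x x) \<and>
     (\<forall>i<N. mv N (hm a \<eta>) z i = m * z i) \<and> Re_fun N K \<eta> = m \<and> m \<ge> 0"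
proof -
  obtain m z where z1: "ip N z z = 1" and bound: "\<And>x. qf N (hm a \<eta>) x \<le> m * ip N x x"
    and ev: "\<And>i. i < N \<Longrightarrow> mv N (hm a \<eta>) z i = m * z i"
    using exists_max[OF N symm_hm[OF a_sym]] by blast
  have "0 \<le> qf N (hm a \<eta>) (\<lambda>i. \<bar>z i\<bar>)" by (rule qf_nonneg_abs[OF hm_nonneg[OF \<eta>]]) auto
  also have "\<dots> \<le> m * ip N (\<lambda>i. \<bar>z i\<bar>) (\<lambda>i. \<bar>z i\<bar>)" by (rule bound)
  also have "\<dots> = m" using z1 ip_abs by simp
  finally have m0: "m \<ge> 0" .
  have KD: "K * mat_diag N \<eta> \<in> carrier_mat N N" using K by simp
  have N0: "N > 0" using N by simp
  let ?A = "cmat (K * mat_diag N \<eta>)"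
  have A: "?A \<in> carrier_mat N N" using KD by (simp add: cmat_def)
  from spectral_radius_mem_max(1)[OF A N0] obtain \<mu> where \<mu>: "eigenvalue ?A \<mu>" and r: "spectral_radius ?A = cmod \<mu>"
    unfolding spectrum_def by auto
  have le: "spectral_radius ?A \<le> m" using eig_bound[OF \<eta> bound m0 \<mu>] r by simp
  have ge: "m \<le> spectral_radius ?A"
  proof (cases "m = 0")
    case True thus ?thesis using r by simp
  next
    case False
    hence "m > 0" using m0 by simp
    from eig_attained[OF \<eta> this ev z1] have "complex_of_real m \<in> spectrum ?A" unfolding spectrum_def by simp
    from spectral_radius_mem_max(2)[OF A N0 imageI[OF this]] show ?thesis using m0 by simp
  qed
  have "Re_fun N K \<eta> = m" unfolding Re_fun_def using le ge by simp
  with z1 bound ev m0 show ?thesis by blast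
qed

end


lemma qf_eig: "(\<And>i. i < n \<Longrightarrow> mv n H z i = m * z i) \<Longrightarrow> qf n H z = m * ip n z z"
  unfolding qf_def ip_def by (simp add: sum_distrib_left mult_ac)

context sdata begin

lemma psd:
  assumes hyp: "\<forall>\<mu>. eigenvalue (cmat K) \<mu> \<longrightarrow> \<mu> \<in> \<real> \<and> Re \<mu> \<ge> 0"
  shows "0 \<le> qf N a x"
proof (rule ccontr)
  assume "\<not> ?thesis"
  hence neg: "qf N a x < 0" by simp
  define b where "b = (\<lambda>i j. - a i j)"
  have sb: "symm N b" using a_sym unfolding symm_def b_def by simp
  obtain m z where z1: "ip N z z = 1" and bound: "\<And>x. qf N b x \<le> m * ip N x x"
    and ev: "\<And>i. i < N \<Longrightarrow> mv N b z i = m * z i"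
    using exists_max[OF N sb] by blast
  have mvb: "mv N b y i = - mv N a y i" for y i unfolding mv_def b_def by (simp add: sum_negf)
  have "qf N b x = - qf N a x" unfolding qf_def mvb ip_def by (simp add: sum_negf)
  hence "0 < m * ip N x x" using bound[of x] neg by simp
  hence m: "m > 0" using ip_nonneg[of N x] by (smt (verit) mult_nonpos_nonneg)
  have "\<And>i. i < N \<Longrightarrow> mv N a z i = (- m) * z i"
  proof -
    fix i assume "i < N"
    hence "- mv N a z i = m * z i" using ev mvb[of z i] by simp
    thus "mv N a z i = (- m) * z i" by (metis minus_minus mult_minus_left)
  qed
  from exists_nz[OF z1] obtain i0 where "i0 < N" "z i0 \<noteq> 0" by blast
  from eigK[OF \<open>\<And>i. i < N \<Longrightarrow> mv N a z i = (- m) * z i\<close> this] have "eigenvalue (cmat K) (complex_of_real (- m))" .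
  with hyp have "Re (complex_of_real (- m)) \<ge> 0" by blast
  thus False using m by simp
qed

lemma sub_grad:
  assumes c: "\<And>i. i < N \<Longrightarrow> c i \<ge> 0" and mc: "mc > 0"
    and ev: "\<And>i. i < N \<Longrightarrow> mv N (hm a c) z i = mc * z i" and z1: "ip N z z = 1"
    and u_def: "u = (\<lambda>i. (\<Sum>j<N. a i j * sqrt (c j) * z j) / mc)"
    and psd: "\<And>x. 0 \<le> qf N a x" and \<eta>': "\<And>i. i < N \<Longrightarrow> \<eta>' i \<ge> 0"
  shows "mc * (\<Sum>i<N. \<eta>' i * (u i)^2) \<le> Re_fun N K \<eta>'"
proof -
  have U1: "\<And>i. i < N \<Longrightarrow> sqrt (c i) * u i = z i"
    by (rule u_fact1[of c mc z u]) (simp_all add: c mc ev u_def)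
  have U2: "\<And>i. i < N \<Longrightarrow> (\<Sum>j<N. a i j * c j * u j) = mc * u i"
    by (rule u_fact2[of c mc z u]) (simp_all add: c mc ev u_def)
  define p where "p = (\<lambda>i. c i * u i)"
  have mvp: "mv N a p i = mc * u i" if "i < N" for i
    using U2[OF that] unfolding mv_def p_def by (simp add: mult_ac)
  have bil: "ip N y (mv N a p) = mc * ip N y u" for y
    unfolding ip_def using mvp by (simp add: sum_distrib_left mult_ac)
  have pu: "ip N p u = 1"
  proof -
    have "ip N p u = ip N z z" unfolding ip_def p_def
    proof (intro sum.cong refl)
      fix i assume "i \<in> {..<N}" hence i: "i < N" by simp
      have "z i * z i = (sqrt (c i) * sqrt (c i)) * (u i * u i)" using U1[OF i] by (metis mult.assoc mult.commute)
      thus "c i * u i * u i = z i * z i" using c[OF i] by simp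
    qed
    thus ?thesis using z1 by simp
  qed
  have qp: "qf N a p = mc" unfolding qf_def bil using pu by simp
  define s where "s = (\<Sum>i<N. \<eta>' i * (u i)^2)"
  have s0: "s \<ge> 0" unfolding s_def using \<eta>' by (intro sum_nonneg) auto
  obtain m' z' where bound': "\<And>x. qf N (hm a \<eta>') x \<le> m' * ip N x x" and Re': "Re_fun N K \<eta>' = m'"
    and m'0: "m' \<ge> 0"
    using max_data[of \<eta>'] \<eta>' by blast
  show ?thesis
  proof (cases "s = 0")
    case True thus ?thesis using Re' m'0 unfolding s_def by simp
  next
    case False
    hence spos: "s > 0" using s0 by simp
    define x' where "x' = (\<lambda>i. sqrt (\<eta>' i) * u i)"
    define q where "q = (\<lambda>i. sqrt (\<eta>' i) * x' i)"
    have xx: "ip N x' x' = s" unfolding ip_def x'_def s_def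
      by (intro sum.cong refl) (use \<eta>' in \<open>auto simp: power2_eq_square mult_ac\<close>)
    have qu: "ip N q u = s" unfolding ip_def q_def x'_def s_def
    proof (intro sum.cong refl)
      fix i assume "i \<in> {..<N}" hence i: "i < N" by simp
      have "sqrt (\<eta>' i) * sqrt (\<eta>' i) = \<eta>' i" using \<eta>'[OF i] by simp
      thus "sqrt (\<eta>' i) * (sqrt (\<eta>' i) * u i) * u i = \<eta>' i * (u i)^2"
        by (simp add: power2_eq_square mult_ac)
    qed
    have "(ip N q (mv N a p))^2 \<le> qf N a q * qf N a p"
      by (rule cs_psd[OF a_sym psd]) (simp add: qp mc)
    hence "(mc * s)^2 \<le> qf N a q * mc" unfolding bil qu qp .
    hence "mc * (mc * s^2) \<le> mc * qf N a q" by (simp add: power2_eq_square mult_ac)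
    hence "mc * s^2 \<le> qf N a q" using mc by simp
    also have "qf N a q = qf N (hm a \<eta>') x'" unfolding qf_hm q_def ..
    also have "\<dots> \<le> m' * s" using bound'[of x'] xx by simp
    finally have "mc * s * s \<le> m' * s" by (simp add: power2_eq_square mult_ac)
    hence "mc * s \<le> m'" using spos by simp
    thus ?thesis using Re' unfolding s_def by simp
  qed
qed

lemma super_grad:
  assumes c: "\<And>i. i < N \<Longrightarrow> c i \<ge> 0" and mc: "mc > 0"
    and ev: "\<And>i. i < N \<Longrightarrow> mv N (hm a c) z i = mc * z i" and z1: "ip N z z = 1"
    and u_def: "u = (\<lambda>i. (\<Sum>j<N. a i j * sqrt (c j) * z j) / mc)"
    and nopos_ex: "\<And>p. qf N a p > 0 \<Longrightarrow> \<exists>w1. \<forall>w. ip N w w1 = 0 \<longrightarrow> qf N a w \<le> 0"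
    and \<eta>': "\<And>i. i < N \<Longrightarrow> \<eta>' i \<ge> 0"
  shows "Re_fun N K \<eta>' \<le> mc * (\<Sum>i<N. \<eta>' i * (u i)^2)"
proof -
  have U1: "\<And>i. i < N \<Longrightarrow> sqrt (c i) * u i = z i"
    by (rule u_fact1[of c mc z u]) (simp_all add: c mc ev u_def)
  have U2: "\<And>i. i < N \<Longrightarrow> (\<Sum>j<N. a i j * c j * u j) = mc * u i"
    by (rule u_fact2[of c mc z u]) (simp_all add: c mc ev u_def)
  define p where "p = (\<lambda>i. c i * u i)"
  have mvp: "mv N a p i = mc * u i" if "i < N" for i
    using U2[OF that] unfolding mv_def p_def by (simp add: mult_ac)
  have bil: "ip N y (mv N a p) = mc * ip N y u" for y
    unfolding ip_def using mvp by (simp add: sum_distrib_left mult_ac)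
  have pu: "ip N p u = 1"
  proof -
    have "ip N p u = ip N z z" unfolding ip_def p_def
    proof (intro sum.cong refl)
      fix i assume "i \<in> {..<N}" hence i: "i < N" by simp
      have "z i * z i = (sqrt (c i) * sqrt (c i)) * (u i * u i)" using U1[OF i] by (metis mult.assoc mult.commute)
      thus "c i * u i * u i = z i * z i" using c[OF i] by simp
    qed
    thus ?thesis using z1 by simp
  qed
  have qp: "qf N a p = mc" unfolding qf_def bil using pu by simp
  from nopos_ex[of p] qp mc obtain w1 where nopos: "\<And>w. ip N w w1 = 0 \<Longrightarrow> qf N a w \<le> 0" by auto
  define s where "s = (\<Sum>i<N. \<eta>' i * (u i)^2)"
  obtain m' z' where z'1: "ip N z' z' = 1" and ev': "\<forall>i<N. mv N (hm a \<eta>') z' i = m' * z' i"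
    and Re': "Re_fun N K \<eta>' = m'"
    using max_data[of \<eta>'] \<eta>' by blast
  have "m' = qf N (hm a \<eta>') z'" using qf_eig[of N "hm a \<eta>'" z' m'] ev' z'1 by simp
  also have "\<dots> = qf N a (\<lambda>i. sqrt (\<eta>' i) * z' i)" by (rule qf_hm)
  finally have m'eq: "m' = qf N a (\<lambda>i. sqrt (\<eta>' i) * z' i)" .
  define y where "y = (\<lambda>i. sqrt (\<eta>' i) * z' i)"
  define x' where "x' = (\<lambda>i. sqrt (\<eta>' i) * u i)"
  have xx: "ip N x' x' = s" unfolding ip_def x'_def s_def
    by (intro sum.cong refl) (use \<eta>' in \<open>auto simp: power2_eq_square mult_ac\<close>)
  have yu: "ip N y u = ip N z' x'" unfolding ip_def y_def x'_def by (simp add: mult_ac)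
  have "qf N a y * qf N a p \<le> (ip N y (mv N a p))^2"
    by (rule rcs[OF a_sym _ nopos]) (simp add: qp mc)
  hence "qf N a y * mc \<le> mc^2 * (ip N z' x')^2" unfolding qp bil yu by (simp add: power_mult_distrib)
  also have "(ip N z' x')^2 \<le> ip N z' z' * ip N x' x'" by (rule cs_ip)
  hence "mc^2 * (ip N z' x')^2 \<le> mc^2 * s" using z'1 xx by (simp add: mult_left_mono)
  finally have "mc * qf N a y \<le> mc * (mc * s)" by (simp add: power2_eq_square mult_ac)
  hence "qf N a y \<le> mc * s" using mc by simp
  thus ?thesis using Re' m'eq unfolding y_def s_def by simp
qed

lemma mono_part:
  assumes x: "\<And>i. i < N \<Longrightarrow> x i \<ge> 0" and c: "\<And>i. i < N \<Longrightarrow> c i \<ge> 0"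
    and k: "k \<ge> 0" and le: "\<And>i. i < N \<Longrightarrow> k * x i \<le> c i"
  shows "k * Re_fun N K x \<le> Re_fun N K c"
proof -
  obtain mx zx where zx1: "ip N zx zx = 1" and evx: "\<forall>i<N. mv N (hm a x) zx i = mx * zx i"
    and Rex: "Re_fun N K x = mx"
    using max_data[of x] x by blast
  obtain mc where boundc: "\<And>y. qf N (hm a c) y \<le> mc * ip N y y" and Rec: "Re_fun N K c = mc"
    using max_data[of c] c by blast
  have "mx = qf N (hm a x) zx" using qf_eig[of N "hm a x" zx mx] evx zx1 by simp
  also have "\<dots> \<le> qf N (hm a x) (\<lambda>i. \<bar>zx i\<bar>)" by (rule qf_abs[OF hm_nonneg[OF x]])
  finally have "k * mx \<le> k * qf N (hm a x) (\<lambda>i. \<bar>zx i\<bar>)" using k by (simp add: mult_left_mono)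
  also have "\<dots> \<le> qf N (hm a c) (\<lambda>i. \<bar>zx i\<bar>)"
    by (rule qf_hm_mono[OF a_nonneg k le x]) auto
  also have "\<dots> \<le> mc * ip N (\<lambda>i. \<bar>zx i\<bar>) (\<lambda>i. \<bar>zx i\<bar>)" by (rule boundc)
  also have "\<dots> = mc" using zx1 ip_abs by simp
  finally show ?thesis using Rex Rec by simp
qed

end


context sdata begin

lemma nopos_ex:
  assumes ord: "order (complex_of_real R) (char_poly (cmat K)) = 1"
    and hyp: "\<forall>\<mu>. eigenvalue (cmat K) \<mu> \<longrightarrow> (\<mu> \<in> \<real> \<and> Re \<mu> \<le> 0) \<or> \<mu> = complex_of_real R"
    and p: "qf N a p > 0"
  shows "\<exists>w1. \<forall>w. ip N w w1 = 0 \<longrightarrow> qf N a w \<le> 0"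
proof -
  obtain m1 z1 where z11: "ip N z1 z1 = 1" and bound1: "\<And>x. qf N a x \<le> m1 * ip N x x"
    and ev1: "\<And>i. i < N \<Longrightarrow> mv N a z1 i = m1 * z1 i"
    using exists_max[OF N a_sym] by blast
  have "0 < m1 * ip N p p" using bound1[of p] p by simp
  hence m1: "m1 > 0" using ip_nonneg[of N p] by (smt (verit) mult_nonpos_nonneg)
  have posR: "m = R" if evm: "eigenvalue (cmat K) (complex_of_real m)" and mpos: "m > 0" for m
  proof -
    from hyp evm have "(complex_of_real m \<in> \<real> \<and> Re (complex_of_real m) \<le> 0) \<or> complex_of_real m = complex_of_real R"
      by blast
    thus ?thesis using mpos by auto
  qed
  show ?thesis
  proof (intro exI[of _ z1] allI impI, rule ccontr)
    fix w assume wz: "ip N w z1 = 0" and "\<not> qf N a w \<le> 0"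
    hence qw: "qf N a w > 0" by simp
    define b where "b = (\<lambda>i j. a i j - m1 * z1 i * z1 j)"
    have sb: "symm N b" using a_sym unfolding symm_def b_def by (simp add: mult_ac)
    have mvb: "mv N b x i = mv N a x i - m1 * z1 i * ip N z1 x" for x i
      unfolding mv_def b_def ip_def by (simp add: left_diff_distrib right_diff_distrib sum_subtractf sum_distrib_left mult_ac)
    have qfb: "qf N b x = qf N a x - m1 * ip N z1 x * ip N x z1" for x
    proof -
      have "qf N b x = ip N x (\<lambda>i. 1 * mv N a x i + (- m1 * ip N z1 x) * z1 i)"
        unfolding qf_def mvb by (simp add: mult_ac)
      also have "\<dots> = qf N a x - m1 * ip N z1 x * ip N x z1" unfolding ip_lin_right qf_def by simp
      finally show ?thesis .
    qed
    obtain m2 z2 where z21: "ip N z2 z2 = 1" and bound2: "\<And>x. qf N b x \<le> m2 * ip N x x"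
      and ev2: "\<And>i. i < N \<Longrightarrow> mv N b z2 i = m2 * z2 i"
      using exists_max[OF N sb] by blast
    have "qf N b w = qf N a w" unfolding qfb using wz by simp
    hence "0 < m2 * ip N w w" using bound2[of w] qw by simp
    hence m2: "m2 > 0" using ip_nonneg[of N w] by (smt (verit) mult_nonpos_nonneg)
    have mvb1: "mv N b z1 i = 0" if "i < N" for i unfolding mvb using ev1[OF that] z11 by simp
    have "ip N z2 (mv N b z1) = 0" unfolding ip_def using mvb1 by simp
    hence "ip N z1 (mv N b z2) = 0" using bil_sym[OF sb, of z1 z2] by simp
    moreover have "ip N z1 (mv N b z2) = m2 * ip N z1 z2"
      unfolding ip_def using ev2 by (simp add: sum_distrib_left mult_ac)
    ultimately have o12: "ip N z1 z2 = 0" using m2 by simp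
    have ev2a: "mv N a z2 i = m2 * z2 i" if "i < N" for i
      using ev2[OF that] unfolding mvb o12 by simp
    from exists_nz[OF z11] obtain i1 where i1: "i1 < N" "z1 i1 \<noteq> 0" by blast
    from exists_nz[OF z21] obtain i2 where i2: "i2 < N" "z2 i2 \<noteq> 0" by blast
    have R1: "m1 = R" by (rule posR[OF eigK[OF ev1 i1] m1])
    have R2: "m2 = R" by (rule posR[OF eigK[OF ev2a i2] m2])
    define v1 where "v1 = vec N (\<lambda>i. complex_of_real (sqrt (d i) * z1 i))"
    define v2 where "v2 = vec N (\<lambda>i. complex_of_real (sqrt (d i) * z2 i))"
    have CK: "cmat K \<in> carrier_mat N N" using K by (simp add: cmat_def)
    have e1: "cmat K *\<^sub>v v1 = complex_of_real R \<cdot>\<^sub>v v1" unfolding v1_def using eigK_eq[OF ev1] R1 by simp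
    have e2: "cmat K *\<^sub>v v2 = complex_of_real R \<cdot>\<^sub>v v2" unfolding v2_def using eigK_eq[OF ev2a] R2 by simp
    have indep: "c1 = 0 \<and> c2 = 0" if lc: "c1 \<cdot>\<^sub>v v1 + c2 \<cdot>\<^sub>v v2 = 0\<^sub>v N" for c1 c2
    proof -
      have E: "c1 * complex_of_real (z1 i) + c2 * complex_of_real (z2 i) = 0" if i: "i < N" for i
      proof -
        have "(c1 \<cdot>\<^sub>v v1 + c2 \<cdot>\<^sub>v v2) $ i = 0" using lc i by simp
        hence "complex_of_real (sqrt (d i)) * (c1 * complex_of_real (z1 i) + c2 * complex_of_real (z2 i)) = 0"
          using i unfolding v1_def v2_def by (simp add: algebra_simps)
        thus ?thesis using d[OF i] by simp
      qed
      have S: "(\<Sum>i<N. complex_of_real (y i) * (c1 * complex_of_real (z1 i) + c2 * complex_of_real (z2 i)))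
            = c1 * complex_of_real (ip N y z1) + c2 * complex_of_real (ip N y z2)" for y
        unfolding ip_def by (simp add: sum.distrib sum_distrib_left algebra_simps)
      have "c1 * complex_of_real (ip N z1 z1) + c2 * complex_of_real (ip N z1 z2) = 0"
        unfolding S[symmetric] using E by simp
      hence c1: "c1 = 0" using z11 o12 by simp
      have "c1 * complex_of_real (ip N z2 z1) + c2 * complex_of_real (ip N z2 z2) = 0"
        unfolding S[symmetric] using E by simp
      hence "c2 = 0" using z21 o12 ip_comm[of N z2 z1] by simp
      with c1 show ?thesis by simp
    qed
    have "2 \<le> order (complex_of_real R) (char_poly (cmat K))"
      by (rule order_ge_2[OF CK _ _ e1 e2 indep]) (simp_all add: v1_def v2_def)
    thus False using ord by simp
  qed
qed

lemma cube_mid: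
  assumes "x \<in> unit_cube N" "y \<in> unit_cube N" "0 \<le> t" "t \<le> 1"
  shows "\<And>i. i < N \<Longrightarrow> 0 \<le> (1 - t) * x i + t * y i"
  using assms unfolding unit_cube_def by (auto intro!: add_nonneg_nonneg mult_nonneg_nonneg)

lemma cube_nonneg: "x \<in> unit_cube N \<Longrightarrow> i < N \<Longrightarrow> 0 \<le> x i"
  unfolding unit_cube_def by auto

lemma sum_split_u:
  assumes c: "\<And>i. i < N \<Longrightarrow> c i \<ge> 0" and U1: "\<And>i. i < N \<Longrightarrow> sqrt (c i) * u i = z i" and z1: "ip N z z = 1"
  shows "(\<Sum>i<N. c i * (u i)^2) = 1"
proof -
  have "(\<Sum>i<N. c i * (u i)^2) = ip N z z" unfolding ip_def
  proof (intro sum.cong refl)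
    fix i assume "i \<in> {..<N}" hence i: "i < N" by simp
    have "z i * z i = (sqrt (c i) * sqrt (c i)) * (u i * u i)" using U1[OF i] by (metis mult.assoc mult.commute)
    thus "c i * (u i)^2 = z i * z i" using c[OF i] by (simp add: power2_eq_square)
  qed
  thus ?thesis using z1 by simp
qed

lemma lin_split: fixes t :: real shows "(\<Sum>i<N. ((1 - t) * x i + t * y i) * w i) = (1 - t) * (\<Sum>i<N. x i * w i) + t * (\<Sum>i<N. y i * w i)"
  unfolding distrib_right sum.distrib by (simp add: sum_distrib_left mult.assoc)

lemma convex_part:
  assumes psd: "\<And>x. 0 \<le> qf N a x"
  shows "convex_on_coord (unit_cube N) (Re_fun N K)"
  unfolding convex_on_coord_def
proof (intro ballI allI impI)
  fix x y and t :: real assume x: "x \<in> unit_cube N" and y: "y \<in> unit_cube N" and t: "0 \<le> t \<and> t \<le> 1"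
  define c where "c = (\<lambda>i. (1 - t) * x i + t * y i)"
  have c0: "\<And>i. i < N \<Longrightarrow> c i \<ge> 0" unfolding c_def using cube_mid[OF x y] t by auto
  have x0: "\<And>i. i < N \<Longrightarrow> x i \<ge> 0" using cube_nonneg[OF x] by simp
  have y0: "\<And>i. i < N \<Longrightarrow> y i \<ge> 0" using cube_nonneg[OF y] by simp
  obtain mc z where z1: "ip N z z = 1" and ev: "\<forall>i<N. mv N (hm a c) z i = mc * z i"
    and Rec: "Re_fun N K c = mc" and mc0: "mc \<ge> 0"
    using max_data[of c] c0 by blast
  have fx: "Re_fun N K x \<ge> 0" using max_data[of x] x0 by auto
  have fy: "Re_fun N K y \<ge> 0" using max_data[of y] y0 by auto
  show "Re_fun N K c \<le> (1 - t) * Re_fun N K x + t * Re_fun N K y"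
  proof (cases "mc = 0")
    case True
    thus ?thesis using Rec fx fy t by simp
  next
    case False
    hence mc: "mc > 0" using mc0 by simp
    define u where "u = (\<lambda>i. (\<Sum>j<N. a i j * sqrt (c j) * z j) / mc)"
    have U1: "\<And>i. i < N \<Longrightarrow> sqrt (c i) * u i = z i"
      by (rule u_fact1[of c mc z u]) (simp_all add: c0 mc ev u_def)
    have sx: "mc * (\<Sum>i<N. x i * (u i)^2) \<le> Re_fun N K x"
      by (rule sub_grad[of c mc z u]) (simp_all add: c0 mc ev z1 u_def psd x0)
    have sy: "mc * (\<Sum>i<N. y i * (u i)^2) \<le> Re_fun N K y"
      by (rule sub_grad[of c mc z u]) (simp_all add: c0 mc ev z1 u_def psd y0)
    have "mc = mc * (\<Sum>i<N. c i * (u i)^2)" using sum_split_u[OF c0 U1 z1] by simp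
    also have "\<dots> = (1 - t) * (mc * (\<Sum>i<N. x i * (u i)^2)) + t * (mc * (\<Sum>i<N. y i * (u i)^2))"
      unfolding c_def lin_split by (simp add: algebra_simps)
    also have "\<dots> \<le> (1 - t) * Re_fun N K x + t * Re_fun N K y"
      using sx sy t by (intro add_mono mult_left_mono) auto
    finally show ?thesis using Rec c_def by simp
  qed
qed

lemma concave_part:
  assumes ord: "order (complex_of_real R) (char_poly (cmat K)) = 1"
    and hyp: "\<forall>\<mu>. eigenvalue (cmat K) \<mu> \<longrightarrow> (\<mu> \<in> \<real> \<and> Re \<mu> \<le> 0) \<or> \<mu> = complex_of_real R"
  shows "concave_on_coord (unit_cube N) (Re_fun N K)"
  unfolding concave_on_coord_def convex_on_coord_def
proof (intro ballI allI impI)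
  fix x y and t :: real assume x: "x \<in> unit_cube N" and y: "y \<in> unit_cube N" and t: "0 \<le> t \<and> t \<le> 1"
  define c where "c = (\<lambda>i. (1 - t) * x i + t * y i)"
  have c0: "\<And>i. i < N \<Longrightarrow> c i \<ge> 0" unfolding c_def using cube_mid[OF x y] t by auto
  have x0: "\<And>i. i < N \<Longrightarrow> x i \<ge> 0" using cube_nonneg[OF x] by simp
  have y0: "\<And>i. i < N \<Longrightarrow> y i \<ge> 0" using cube_nonneg[OF y] by simp
  obtain mc z where z1: "ip N z z = 1" and ev: "\<forall>i<N. mv N (hm a c) z i = mc * z i"
    and Rec: "Re_fun N K c = mc" and mc0: "mc \<ge> 0"
    using max_data[of c] c0 by blast
  have "(1 - t) * Re_fun N K x + t * Re_fun N K y \<le> Re_fun N K c"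
  proof (cases "mc = 0")
    case True
    have "(1 - t) * Re_fun N K x \<le> Re_fun N K c"
      by (rule mono_part[OF x0 c0]) (use t y0 in \<open>auto simp: c_def\<close>)
    moreover have "t * Re_fun N K y \<le> Re_fun N K c"
      by (rule mono_part[OF y0 c0]) (use t x0 in \<open>auto simp: c_def\<close>)
    ultimately show ?thesis using True Rec by simp
  next
    case False
    hence mc: "mc > 0" using mc0 by simp
    define u where "u = (\<lambda>i. (\<Sum>j<N. a i j * sqrt (c j) * z j) / mc)"
    have U1: "\<And>i. i < N \<Longrightarrow> sqrt (c i) * u i = z i"
      by (rule u_fact1[of c mc z u]) (simp_all add: c0 mc ev u_def)
    have npe: "\<And>p. qf N a p > 0 \<Longrightarrow> \<exists>w1. \<forall>w. ip N w w1 = 0 \<longrightarrow> qf N a w \<le> 0"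
      by (rule nopos_ex[OF ord hyp])
    have sx: "Re_fun N K x \<le> mc * (\<Sum>i<N. x i * (u i)^2)"
      by (rule super_grad[of c mc z u]) (simp_all add: c0 mc ev z1 u_def npe x0)
    have sy: "Re_fun N K y \<le> mc * (\<Sum>i<N. y i * (u i)^2)"
      by (rule super_grad[of c mc z u]) (simp_all add: c0 mc ev z1 u_def npe y0)
    have "(1 - t) * Re_fun N K x + t * Re_fun N K y \<le> (1 - t) * (mc * (\<Sum>i<N. x i * (u i)^2)) + t * (mc * (\<Sum>i<N. y i * (u i)^2))"
      using sx sy t by (intro add_mono mult_left_mono) auto
    also have "\<dots> = mc * (\<Sum>i<N. c i * (u i)^2)"
      unfolding c_def lin_split by (simp add: algebra_simps)
    also have "\<dots> = mc" using sum_split_u[OF c0 U1 z1] by simp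
    finally show ?thesis using Rec by simp
  qed
  thus "- Re_fun N K (\<lambda>i. (1 - t) * x i + t * y i) \<le> (1 - t) * - Re_fun N K x + t * - Re_fun N K y"
    unfolding c_def by simp
qed

end

theorem theorem4p1:
  fixes N :: nat and K :: "real mat"
  assumes "N \<ge> 1"
    and "K \<in> carrier_mat N N"
    and "\<forall>i<N. \<forall>j<N. K $$ (i,j) \<ge> 0"
    and "diag_symmetrizable N K"
  shows "((\<forall>\<mu>. eigenvalue (cmat K) \<mu> \<longrightarrow> \<mu> \<in> \<real> \<and> Re \<mu> \<ge> 0)
            \<longrightarrow> convex_on_coord (unit_cube N) (Re_fun N K))
       \<and> ((eigenvalue (cmat K) (complex_of_real (spectral_radius (cmat K)))
            \<and> order (complex_of_real (spectral_radius (cmat K))) (char_poly (cmat K)) = 1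
            \<and> (\<forall>\<mu>. eigenvalue (cmat K) \<mu> \<longrightarrow>
                   (\<mu> \<in> \<real> \<and> Re \<mu> \<le> 0) \<or> \<mu> = complex_of_real (spectral_radius (cmat K))))
            \<longrightarrow> concave_on_coord (unit_cube N) (Re_fun N K))"
proof -
  obtain D S where D: "D \<in> carrier_mat N N" and S: "S \<in> carrier_mat N N" and dD: "diagonal_mat D"
    and Dpos: "\<forall>i<N. D $$ (i,i) > 0" and St: "transpose_mat S = S" and KDS: "K = D * S"
    using assms(4) unfolding diag_symmetrizable_def by blast
  define d where "d = (\<lambda>i. D $$ (i,i))"
  define a where "a = (\<lambda>i j. sqrt (d i) * S $$ (i,j) * sqrt (d j))"
  have Kij: "K $$ (i,j) = d i * S $$ (i,j)" if ij: "i < N" "j < N" for i j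
  proof -
    have "K $$ (i,j) = (\<Sum>k\<in>{0..<N}. D $$ (i,k) * S $$ (k,j))"
      using D S ij unfolding KDS by (simp add: scalar_prod_def)
    also have "\<dots> = (\<Sum>k\<in>{0..<N}. if k = i then D $$ (i,i) * S $$ (i,j) else 0)"
      by (intro sum.cong refl) (use dD D ij in \<open>auto simp: diagonal_mat_def\<close>)
    also have "\<dots> = d i * S $$ (i,j)" using ij by (simp add: d_def)
    finally show ?thesis .
  qed
  have dpos: "\<And>i. i < N \<Longrightarrow> d i > 0" using Dpos unfolding d_def by simp
  interpret sdata N K d a
  proof
    show "1 \<le> N" by (rule assms(1))
    show "K \<in> carrier_mat N N" by (rule assms(2))
    show "\<And>i. i < N \<Longrightarrow> 0 < d i" by (rule dpos)
    show "K $$ (i,j) = sqrt (d i) * a i j / sqrt (d j)" if "i < N" "j < N" for i j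
    proof -
      have "sqrt (d i) * sqrt (d i) = d i" "sqrt (d j) > 0" using dpos[OF that(1)] dpos[OF that(2)] by auto
      thus ?thesis unfolding Kij[OF that] a_def by (simp add: field_simps)
    qed
    show "0 \<le> a i j" if "i < N" "j < N" for i j
    proof -
      have "0 \<le> d i * S $$ (i,j)" using assms(3) that Kij by metis
      hence "0 \<le> S $$ (i,j)" using dpos[OF that(1)] by (simp add: zero_le_mult_iff)
      thus ?thesis unfolding a_def using dpos[OF that(1)] dpos[OF that(2)] by simp
    qed
    show "symm N a" unfolding symm_def a_def
    proof (intro allI impI)
      fix i j assume ij: "i < N" "j < N"
      have "S $$ (i,j) = transpose_mat S $$ (i,j)" using St by simp
      also have "\<dots> = S $$ (j,i)" using S ij by simp
      finally show "sqrt (d i) * S $$ (i, j) * sqrt (d j) = sqrt (d j) * S $$ (j, i) * sqrt (d i)"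
        by (simp add: mult_ac)
    qed
  qed
  show ?thesis
  proof (intro conjI impI)
    assume h1: "\<forall>\<mu>. eigenvalue (cmat K) \<mu> \<longrightarrow> \<mu> \<in> \<real> \<and> Re \<mu> \<ge> 0"
    show "convex_on_coord (unit_cube N) (Re_fun N K)"
      by (rule convex_part[OF psd[OF h1]])
  next
    assume h2: "eigenvalue (cmat K) (complex_of_real (spectral_radius (cmat K)))
            \<and> order (complex_of_real (spectral_radius (cmat K))) (char_poly (cmat K)) = 1
            \<and> (\<forall>\<mu>. eigenvalue (cmat K) \<mu> \<longrightarrow>
                   (\<mu> \<in> \<real> \<and> Re \<mu> \<le> 0) \<or> \<mu> = complex_of_real (spectral_radius (cmat K)))"
    show "concave_on_coord (unit_cube N) (Re_fun N K)"
      by (rule concave_part[of "spectral_radius (cmat K)"]) (use h2 in auto)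
  qed
qed

end
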